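(* Let $n=2k$ and let $r$ be an integer with $1<r<k$ and $\gcd(r,k)=1$. Then $G(x)=\sum_{i=1}^{2^r-1}x^{(i2^{k-r}+1)(2^k-1)+1}$ takes all its values in $\mathbb{F}_{2^k}$, and as an $(n,k)$-function $G:\mathbb{F}_{2^n}\to\mathbb{F}_{2^k}$ it is vectorial bent.
   Context: An $(n,k)$-function $G$ is vectorial bent if for every $\lambda\in\mathbb{F}_{2^k}^*$ the Boolean function $\mathrm{Tr}^k_1(\lambda G(x))$ is bent, i.e. $|\sum_{x\in\mathbb{F}_{2^n}}(-1)^{\mathrm{Tr}^k_1(\lambda G(x))+\mathrm{Tr}^n_1(ax)}|=2^{k}$ for all $a\in\mathbb{F}_{2^n}$, where $\mathrm{Tr}^m_1(x)=\sum_{i=0}^{m-1}x^{2^i}$. *)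

theory Defs
  imports Main
begin

definition tr :: "nat \<Rightarrow> 'a::field \<Rightarrow> 'a" where
  "tr m x = (\<Sum>i<m. x ^ (2 ^ i))"

text \<open>Additive character: (-1)^y for y in F_2 (0 maps to 1, anything else to -1).\<close>
definition sgn2 :: "'a::field \<Rightarrow> int" where
  "sgn2 y = (if y = 0 then 1 else -1)"

definition in_subfield :: "nat \<Rightarrow> 'a::field \<Rightarrow> bool" where
  "in_subfield k y \<longleftrightarrow> y ^ (2 ^ k) = y"

text \<open>Vectorial bentness of an (n,k)-function G : F_{2^n} -> F_{2^k}, where F_{2^n} is the
  finite field type 'a and F_{2^k} is its subfield of elements fixed by x |-> x^(2^k).\<close>
definition vectorial_bent :: "nat \<Rightarrow> nat \<Rightarrow> ('a::{field,finite} \<Rightarrow> 'a) \<Rightarrow> bool" where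
  "vectorial_bent n k G \<longleftrightarrow>
     (\<forall>l. in_subfield k l \<and> l \<noteq> 0 \<longrightarrow>
        (\<forall>a::'a. \<bar>\<Sum>x\<in>UNIV. sgn2 (tr k (l * G x) + tr n (a * x))\<bar> = 2 ^ k))"

end

theory Submission
  imports Defs "HOL-Computational_Algebra.Polynomial"
begin



lemma char2:
  fixes dummy :: "'a::{field,finite}"
  assumes "card (UNIV::'a set) = 2^n" "n > 0"
  shows "(2::'a) = 0"
proof -
  have "(\<Sum>y\<in>UNIV. y + 1) = (\<Sum>y\<in>UNIV. (y::'a))"
    by (rule sum.reindex_bij_witness[of _ "\<lambda>y. y - 1" "\<lambda>y. y+1"]) auto
  hence "of_nat (card (UNIV::'a set)) = (0::'a)" by (simp add: sum.distrib)
  hence "(2::'a)^n = 0" using assms by simp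
  thus ?thesis by simp
qed

lemma c2_add_self: "(2::'a::field) = 0 \<Longrightarrow> x + x = (0::'a)"
proof -
  assume a: "(2::'a) = 0"
  have "x + x = 2 * x" by (simp only: mult_2)
  also have "\<dots> = 0" by (simp only: a mult_zero_left)
  finally show ?thesis .
qed

lemma c2_neg: "(2::'a::field) = 0 \<Longrightarrow> - y = (y::'a)"
  by (rule add.inverse_unique, erule c2_add_self)

lemma c2_minus: "(2::'a::field) = 0 \<Longrightarrow> x - y = x + (y::'a)"
  by (simp only: diff_conv_add_uminus c2_neg)

lemma c2_eq: "(2::'a::field) = 0 \<Longrightarrow> (x + y = 0) = (x = (y::'a))"
  by (simp only: c2_minus[symmetric] right_minus_eq)

lemma frob:
  assumes "(2::'a::field) = 0"
  shows "((x::'a) + y)^(2^j) = x^(2^j) + y^(2^j)"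
proof (induction j)
  case 0 then show ?case by simp
next
  case (Suc j)
  have sq: "\<And>z::'a. z^(2^Suc j) = (z^(2^j))^2" by (metis power_Suc2 power_mult)
  have "(x+y)^(2^Suc j) = ((x+y)^(2^j))^2" by (rule sq)
  also have "\<dots> = (x^(2^j) + y^(2^j))^2" using Suc by simp
  also have "\<dots> = (x^(2^j))^2 + (y^(2^j))^2 + 2 * (x^(2^j) * y^(2^j))" by (simp add: power2_eq_square algebra_simps)
  also have "\<dots> = x^(2^Suc j) + y^(2^Suc j) + 2 * (x^(2^j) * y^(2^j))" by (simp only: sq)
  also have "\<dots> = x^(2^Suc j) + y^(2^Suc j)" by (simp only: assms mult_zero_left add_0_right)
  finally show ?case .
qed

lemma frob_inj:
  assumes "(2::'a::field) = 0" "(x::'a)^(2^j) = y^(2^j)"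
  shows "x = y"
proof -
  have "(x + y)^(2^j) = x^(2^j) + y^(2^j)" by (rule frob[OF assms(1)])
  hence "(x + y)^(2^j) = 0" using assms(2) c2_add_self[OF assms(1)] by simp
  hence "x + y = 0" by simp
  thus ?thesis using c2_eq[OF assms(1)] by simp
qed

lemma fermat:
  fixes x :: "'a::{field,finite}"
  shows "x ^ card (UNIV::'a set) = x"
proof (cases "x = 0")
  case True then show ?thesis by (simp add: zero_power finite_UNIV_card_ge_0)
next
  case False
  let ?S = "UNIV - {0::'a}"
  have "(\<Prod>y\<in>?S. x * y) = (\<Prod>y\<in>?S. y)"
    by (rule prod.reindex_bij_witness[of _ "\<lambda>y. y / x" "\<lambda>y. x * y"]) (use False in auto)
  hence "x ^ card ?S * (\<Prod>y\<in>?S. y) = (\<Prod>y\<in>?S. y)" by (simp add: prod.distrib)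
  moreover have "(\<Prod>y\<in>?S. y) \<noteq> 0" by simp
  ultimately have e1: "x ^ card ?S = 1" by simp
  have e2: "card ?S + 1 = card (UNIV::'a set)" using finite_UNIV_card_ge_0[where 'a='a] by (simp add: card_Diff_singleton)
  have "x ^ card (UNIV::'a set) = x ^ (card ?S + 1)" using e2 by simp
  also have "\<dots> = x^card ?S * x" by (simp only: power_add power_one_right)
  also have "\<dots> = x" using e1 by simp
  finally show ?thesis .
qed




lemma roots_bound:
  fixes p :: "'a::field poly"
  assumes "coeff p j \<noteq> 0" "degree p \<le> d"
  shows "card {x. poly p x = 0} \<le> d"
proof -
  have "p \<noteq> 0" using assms(1) by auto
  thus ?thesis using card_poly_roots_bound[of p] assms(2) by linarith
qed

lemma sum_split_add: "(\<Sum>i<m+n. f i) = (\<Sum>i<m. f i) + (\<Sum>i<n. f (m+i::nat))"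
  by (induction n) (simp_all add: add.assoc)

lemma tr_add:
  assumes c2: "(2::'a::field) = 0"
  shows "tr m ((x::'a) + y) = tr m x + tr m y"
  unfolding tr_def by (simp only: frob[OF c2] sum.distrib)

lemma tr_sq:
  assumes c2: "(2::'a::field) = 0"
  shows "(tr m (x::'a))^2 = (\<Sum>i<m. x^(2^Suc i))"
proof (induction m)
  case 0 then show ?case by (simp add: tr_def)
next
  case (Suc m)
  have "(tr (Suc m) x)^2 = (tr m x + x^(2^m))^(2^1)" by (simp add: tr_def)
  also have "\<dots> = (tr m x)^2 + (x^(2^m))^2" by (simp only: frob[OF c2]) simp
  also have "\<dots> = (\<Sum>i<m. x^(2^Suc i)) + x^(2^Suc m)" using Suc by (simp add: power_mult[symmetric] mult.commute)
  finally show ?case by simp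
qed

lemma tr_K:
  assumes c2: "(2::'a::field) = 0" and xK: "(x::'a)^(2^k) = x"
  shows "tr k x = 0 \<or> tr k x = 1"
proof -
  have "(\<Sum>i<Suc k. x^(2^i)) = x + (\<Sum>i<k. x^(2^Suc i))" by (simp only: sum.lessThan_Suc_shift) simp
  moreover have "(\<Sum>i<Suc k. x^(2^i)) = tr k x + x" using xK by (simp add: tr_def)
  ultimately have "(tr k x)^2 = tr k x" using tr_sq[OF c2, of k x] by (simp add: add.commute)
  hence "tr k x * (tr k x - 1) = 0" by (simp add: power2_eq_square algebra_simps)
  thus ?thesis by simp
qed

lemma tr_n:
  assumes c2: "(2::'a::field) = 0"
  shows "tr (2*k) (x::'a) = tr k (x + x^(2^k))"
proof -
  have "tr (2*k) x = tr k x + (\<Sum>i<k. x^(2^(k+i)))" unfolding tr_def using sum_split_add[where m=k and n=k] by (simp add: mult_2)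
  also have "(\<Sum>i<k. x^(2^(k+i))) = tr k (x^(2^k))" unfolding tr_def
    by (simp add: power_add power_mult)
  finally show ?thesis by (simp add: tr_add[OF c2])
qed

lemma c2_swap:
  assumes c2: "(2::'a::field) = 0" and h: "a + b = c + (d::'a)"
  shows "d + b = c + a"
proof -
  have "d + b = (a + b) + (a + d) - (a + a)" by (simp add: algebra_simps)
  also have "\<dots> = (c + d) + (a + d) - 0" by (simp only: h c2_add_self[OF c2])
  also have "\<dots> = c + a + (d + d)" by (simp add: algebra_simps)
  also have "\<dots> = c + a" by (simp only: c2_add_self[OF c2] add_0_right)
  finally show ?thesis .
qed

lemma card_K:
  fixes dummy :: "'a::{field,finite}"
  assumes c2: "(2::'a) = 0" and card: "card (UNIV::'a set) = 2^k * 2^k" and k: "k > 0"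
  shows "card {y::'a. y^(2^k) = y} = 2^k"
proof -
  let ?q = "2^k :: nat" 
  let ?K = "{y::'a. y^?q = y}"
  have "(2::nat)^1 \<le> 2^k" by (rule power_increasing) (use k in auto)
  hence q2: "?q \<ge> 2" by simp
  define p :: "'a poly" where "p = monom 1 ?q - monom 1 1"
  have "coeff p ?q \<noteq> 0" using q2 by (simp add: p_def)
  moreover have "degree p \<le> ?q" unfolding p_def
    by (rule order.trans[OF degree_diff_le_max]) (use q2 degree_monom_le[of "1::'a" 1] degree_monom_le[of "1::'a" ?q] in \<open>auto\<close>)
  ultimately have "card {x. poly p x = 0} \<le> ?q" by (rule roots_bound)
  moreover have "{x. poly p x = 0} = ?K" by (simp add: p_def poly_monom)
  ultimately have up: "card ?K \<le> ?q" by simp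
  have ferm: "\<And>x::'a. x^(?q*?q) = x" using fermat[where 'a='a, unfolded card] .
  define T where "T x = x + x^?q" for x :: 'a
  have TK: "T x \<in> ?K" for x
  proof -
    have "(T x)^?q = x^?q + (x^?q)^?q" unfolding T_def by (rule frob[OF c2])
    also have "\<dots> = x^?q + x" by (simp add: power_mult[symmetric] ferm)
    finally show ?thesis by (simp add: T_def add.commute)
  qed
  define pre where "pre c = (SOME x. T x = c)" for c
  have "UNIV \<subseteq> (\<lambda>(c,y). pre c + y) ` (range T \<times> ?K)"
  proof
    fix x :: 'a
    have "\<exists>x'. T x' = T x" by blast
    hence px: "T (pre (T x)) = T x" unfolding pre_def by (rule someI_ex)
    have "(x - pre (T x))^?q = x - pre (T x)"
    proof -
      have "(x - pre (T x))^?q = x^?q + (pre (T x))^?q" by (simp only: c2_minus[OF c2] frob[OF c2])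
      also have "\<dots> = x + pre (T x)"
      proof -
        have px': "pre (T x) + pre (T x)^?q = x + x^?q" using px by (simp only: T_def)
        show ?thesis using c2_swap[OF c2 px'] .
      qed
      finally show ?thesis by (simp only: c2_minus[OF c2])
    qed
    thus "x \<in> (\<lambda>(c,y). pre c + y) ` (range T \<times> ?K)"
      by (intro image_eqI[of _ _ "(T x, x - pre (T x))"]) auto
  qed
  hence "card (UNIV::'a set) \<le> card ((\<lambda>(c,y). pre c + y) ` (range T \<times> ?K))"
    by (intro card_mono) auto
  also have "\<dots> \<le> card (range T \<times> ?K)" by (rule card_image_le) simp
  also have "\<dots> = card (range T) * card ?K" by (rule card_cartesian_product)
  also have "\<dots> \<le> card ?K * card ?K" using TK by (intro mult_right_mono card_mono) auto
  finally have "?q * ?q \<le> card ?K * card ?K" using card by simp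
  hence "?q^2 \<le> (card ?K)^2" by (simp add: power2_eq_square)
  hence "?q \<le> card ?K" by (rule power2_le_imp_le) simp
  with up show ?thesis by simp
qed

lemma tr_nonzero:
  fixes dummy :: "'a::{field,finite}"
  assumes c2: "(2::'a) = 0" and cK: "card {y::'a. y^(2^k) = y} = 2^k" and k: "k > 0"
  shows "\<exists>t::'a. t^(2^k) = t \<and> tr k t = 1"
proof (rule ccontr)
  assume na: "\<not> ?thesis"
  define p :: "'a poly" where "p = (\<Sum>i<k. monom 1 (2^i))"
  have ev: "poly p x = tr k x" for x by (simp add: p_def poly_sum poly_monom tr_def)
  have "coeff p (2^(k-1)) = (\<Sum>i<k. if 2^i = (2::nat)^(k-1) then 1 else 0)"
    by (simp add: p_def coeff_sum)
  also have "\<dots> = (\<Sum>i<k. if i = k - 1 then 1 else 0)" by (intro sum.cong) auto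
  also have "\<dots> = 1" using k by simp
  finally have c: "coeff p (2^(k-1)) \<noteq> 0" by simp
  have "degree p \<le> 2^(k-1)" unfolding p_def
    by (intro degree_sum_le order.trans[OF degree_monom_le]) (auto intro: power_increasing)
  from roots_bound[OF c this] have rb: "card {x. poly p x = 0} \<le> 2^(k-1)" .
  have "{y::'a. y^(2^k) = y} \<subseteq> {x. poly p x = 0}"
  proof
    fix y :: 'a assume "y \<in> {y::'a. y^(2^k) = y}"
    hence "y^(2^k) = y" by simp
    hence "tr k y = 0" using na tr_K[OF c2, of y k] by blast
    thus "y \<in> {x. poly p x = 0}" using ev by simp
  qed
  hence "2^k \<le> card {x. poly p x = 0}" using cK by (metis card_mono finite)
  with rb have "(2::nat)^k \<le> 2^(k-1)" by (meson le_trans)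
  hence "k \<le> k - 1" by (rule power_le_imp_le_exp[rotated]) simp
  thus False using k by simp
qed




locale FF =
  fixes k r :: nat and \<gamma> :: "'a::{field,finite}"
  assumes c2: "(2::'a) = 0"
  and ferm: "\<And>x::'a. x^(2^k*2^k) = x"
  and cardU: "card (UNIV::'a set) = 2^k*2^k"
  and cK: "card {y::'a. y^(2^k) = y} = 2^k"
  and r1: "1 < r" and rk: "r < k" and cop: "coprime r k"
  and gam: "\<gamma>^(2^k) \<noteq> \<gamma>"
begin

abbreviation "q \<equiv> (2::nat)^k"
abbreviation "K \<equiv> {y::'a. y^q = y}"
abbreviation "m \<equiv> (2::nat)^(k-r)"
abbreviation "s \<equiv> (2::nat)^r"

lemma add_self: "(x::'a) + x = 0" by (rule c2_add_self[OF c2])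
lemma neg: "- (x::'a) = x" by (rule c2_neg[OF c2])
lemma minus: "(x::'a) - y = x + y" by (rule c2_minus[OF c2])
lemma frobq: "((x::'a) + y)^q = x^q + y^q" by (rule frob[OF c2])

lemma K_add: "x \<in> K \<Longrightarrow> y \<in> K \<Longrightarrow> x + y \<in> K" by (simp add: frobq)
lemma K_mult: "x \<in> K \<Longrightarrow> y \<in> K \<Longrightarrow> x * y \<in> K" by (simp add: power_mult_distrib)
lemma K_div: "x \<in> K \<Longrightarrow> y \<in> K \<Longrightarrow> x / y \<in> K" by (simp add: power_divide)
lemma qq: "((x::'a)^q)^q = x" by (simp add: power_mult[symmetric] ferm)
lemma T_K: "(x::'a) + x^q \<in> K" by (simp add: frobq qq add.commute)
lemma finK: "finite K" by simp
lemma q_pos: "q > 0" by simp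
lemma ms: "m * s = q" using rk by (simp add: power_add[symmetric])

lemma K_pow_hom: "t \<in> K \<Longrightarrow> t^(M*(q-1)+1) = t"
proof (induction M)
  case 0 then show ?case by simp
next
  case (Suc M)
  have ex: "Suc M*(q-1)+1 = M*(q-1) + (q-1+1)" by simp
  have "t^(Suc M*(q-1)+1) = t^(M*(q-1)) * t^(q-1+1)" by (simp only: ex power_add)
  also have "t^(q-1+1) = t" using Suc.prems q_pos by simp
  also have "t^(M*(q-1)) * t = t" using Suc by (simp add: power_add)
  finally show ?case .
qed

definition Gf :: "'a \<Rightarrow> 'a" where
  "Gf x = (\<Sum>i=1..2^r - 1. x ^ ((i * 2 ^ (k - r) + 1) * (2 ^ k - 1) + 1))"

lemma Gf_hom:
  assumes "t \<in> K" shows "Gf (t * x) = t * Gf x"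
proof -
  have h: "\<And>i. t^((i * 2^(k-r) + 1) * (2^k - 1) + 1) = t" using K_pow_hom[OF assms] by blast
  show ?thesis unfolding Gf_def sum_distrib_left power_mult_distrib h ..
qed

lemma tr_vals: "x \<in> K \<Longrightarrow> tr k x = 0 \<or> tr k x = 1"
  using tr_K[OF c2] by simp

lemma sgn2_flip: "x \<in> K \<Longrightarrow> sgn2 (tr k x + 1) = - sgn2 (tr k x)"
  using tr_vals[of x] by (auto simp: sgn2_def add_self)

lemma charsum:
  assumes cK': "c \<in> K"
  shows "(\<Sum>t\<in>K. sgn2 (tr k (t * c))) = (if c = 0 then int q else 0)"
proof (cases "c = 0")
  case True
  have "tr k (0::'a) = 0" by (simp add: tr_def power_0_left)
  then show ?thesis using True cK by (simp add: sgn2_def)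
next
  case False
  obtain t0 where t0: "t0 \<in> K" "tr k t0 = 1"
    using tr_nonzero[OF c2 cK] rk by auto
  have A: "(\<Sum>t\<in>K. sgn2 (tr k (t * c))) = (\<Sum>t\<in>K. sgn2 (tr k t))"
    by (rule sum.reindex_bij_witness[of _ "\<lambda>t. t / c" "\<lambda>t. t * c"])
       (use False cK' in \<open>auto simp: power_mult_distrib power_divide\<close>)
  have "(\<Sum>t\<in>K. sgn2 (tr k t)) = (\<Sum>t\<in>K. sgn2 (tr k (t + t0)))"
  proof (rule sum.reindex_bij_witness[of K "\<lambda>t. t + t0" "\<lambda>t. t + t0" K "\<lambda>t. sgn2 (tr k (t + t0))" "\<lambda>t. sgn2 (tr k t)"])
    fix a assume "a \<in> K"
    show "a + t0 + t0 = a" by (simp add: add.assoc add_self)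
    show "a + t0 + t0 = a" by (simp add: add.assoc add_self)
    show "a + t0 \<in> K" using t0 \<open>a \<in> K\<close> by (simp add: frobq)
    show "a + t0 \<in> K" using t0 \<open>a \<in> K\<close> by (simp add: frobq)
    show "sgn2 (tr k (a + t0 + t0)) = sgn2 (tr k a)" by (simp add: add.assoc add_self)
  qed
  also have "\<dots> = (\<Sum>t\<in>K. - sgn2 (tr k t))"
    by (intro sum.cong refl) (simp add: tr_add[OF c2] t0 sgn2_flip)
  finally have "(\<Sum>t\<in>K. sgn2 (tr k t)) = - (\<Sum>t\<in>K. sgn2 (tr k t))"
    by (simp add: sum_negf)
  then show ?thesis using False A by simp
qed

end



context FF begin

lemma s_pos: "s > 0" by simp

lemma P1: "(x::'a)^q = x * x^(q-1)"
proof -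
  have "x^q = x^(q-1+1)" by simp
  also have "\<dots> = x * x^(q-1)" by (simp only: power_add power_one_right mult.commute)
  finally show ?thesis .
qed

lemma P2: assumes "(x::'a) \<noteq> 0" shows "(x^(q-1))^q * x^(q-1) = 1"
proof -
  have ex: "(q-1)*q + (q-1) + 1 = q*q" using q_pos by (simp add: algebra_simps)
  have "(x^(q-1))^q * x^(q-1) * x = x^((q-1)*q + (q-1) + 1)"
    by (simp only: power_add power_mult power_one_right)
  also have "\<dots> = x" by (simp only: ex ferm)
  finally show ?thesis using assms by simp
qed

lemma P3: "((u::'a)^m)^s = u^q"
  by (simp only: power_mult[symmetric] ms)

lemma P5: assumes "(u::'a)^q * u = 1" shows "(u^m)^q * u^m = 1"
proof -
  have "(u^m)^q * u^m = (u^q * u)^m" by (simp only: power_mult[symmetric] mult.commute power_mult_distrib)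
  thus ?thesis using assms by simp
qed

lemma Gf_term: assumes u: "u = (x::'a)^(q-1)"
  shows "x^((i * 2^(k-r) + 1) * (2^k - 1) + 1) = x * u * (u^m)^i"
proof -
  have ex: "(i * 2^(k-r) + 1) * (2^k - 1) + 1 = (q-1)*(i*m+1) + 1" by (simp only: mult.commute)
  have "x^((i * 2^(k-r) + 1) * (2^k - 1) + 1) = u^(i*m+1) * x"
    unfolding u ex by (simp only: power_add power_mult power_one_right)
  also have "u^(i*m+1) = (u^m)^i * u" by (simp only: power_add power_mult power_one_right mult.commute[of i m])
  also have "(u^m)^i * u * x = x * u * (u^m)^i" by (simp only: mult_ac)
  finally show ?thesis .
qed

lemma Gf_closed: assumes u: "u = (x::'a)^(q-1)"
  shows "Gf x = x * u * (\<Sum>i=1..s-1. (u^m)^i)"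
  unfolding Gf_def sum_distrib_left Gf_term[OF u] ..

lemma geo: "(1 + (w::'a)) * (\<Sum>i=1..s-1. w^i) = w + w^s"
proof -
  have "(2::nat)^1 \<le> 2^r" by (rule power_increasing) (use r1 in auto)
  hence "s - 1 \<ge> 1" by simp
  from sum_gp_multiplied[OF this, of w]
  have "(1 - w) * (\<Sum>i=1..s-1. w^i) = w^1 - w^Suc (s-1)" .
  moreover have "Suc (s-1) = s" using s_pos by simp
  ultimately show ?thesis by (simp only: minus power_one_right)
qed

lemma GC: assumes u: "u = (x::'a)^(q-1)" and x: "x \<noteq> 0"
  shows "(1 + u^m) * Gf x = x * (u * u^m + 1)"
proof -
  have "(1 + u^m) * Gf x = x * u * ((1 + u^m) * (\<Sum>i=1..s-1. (u^m)^i))"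
    by (simp only: Gf_closed[OF u]) (simp add: algebra_simps)
  also have "\<dots> = x * (u * u^m + u * (u^m)^s)" by (simp only: geo) (simp add: algebra_simps)
  also have "u * (u^m)^s = 1" using P2[OF x] u by (simp add: P3 mult.commute)
  finally show ?thesis .
qed

lemma Gf_one: "Gf 1 = 1"
proof -
  have "Gf 1 = of_nat (s - 1)" by (simp add: Gf_def)
  also have "s - 1 = Suc (2 * (2^(r-1) - 1))"
  proof -
    have rr: "r = Suc (r-1)" using r1 by simp
    have "s = 2^Suc (r-1)" by (subst rr) (rule refl)
    hence "s = 2 * 2^(r-1)" by (simp only: power_Suc)
    moreover have "2^(r-1) \<ge> (1::nat)" by simp
    ultimately show ?thesis by linarith
  qed
  also have "of_nat (Suc (2 * (2^(r-1) - 1))) = (1::'a) + 2 * of_nat (2^(r-1) - 1)"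
    by (simp only: of_nat_Suc of_nat_mult of_nat_numeral add.commute)
  also have "\<dots> = 1" by (simp only: c2 mult_zero_left add_0_right)
  finally show ?thesis .
qed

lemma Gf_K: "Gf x \<in> K"
proof (cases "x \<in> K")
  case True
  have "Gf (x * 1) = x * Gf 1" by (rule Gf_hom[OF True])
  hence "Gf x = x" using Gf_one by simp
  thus ?thesis using True by simp
next
  case False
  hence x0: "x \<noteq> 0" by (auto simp: power_0_left)
  define u where "u = x^(q-1)"
  define w where "w = u^m"
  have p2: "u^q * u = 1" using P2[OF x0] u_def by simp
  have p5: "w^q * w = 1" unfolding w_def by (rule P5[OF p2])
  have p1: "x^q = x * u" unfolding u_def by (rule P1)
  have w1: "w \<noteq> 1"
  proof
    assume "w = 1"
    hence "u * w^s = u" by simp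
    moreover have "u * w^s = 1" using p2 unfolding w_def by (simp add: P3 mult.commute)
    ultimately have "u = 1" by simp
    hence "x^q = x" using p1 by simp
    thus False using False by simp
  qed
  hence w1': "1 + w \<noteq> 0" using c2_eq[OF c2, of 1 w] by auto
  define Gx where "Gx = Gf x"
  have gc: "(1 + w) * Gx = x * (u * w + 1)" unfolding Gx_def w_def by (rule GC[OF u_def x0])
  have "((1 + w) * Gx)^q = (x * (u * w + 1))^q" by (simp only: gc)
  hence e1: "(1 + w^q) * Gx^q = x^q * (u^q * w^q + 1)"
    by (simp only: power_mult_distrib frobq power_one)
  have "(1 + w) * Gx^q = w * ((1 + w^q) * Gx^q) - (w^q * w - 1) * Gx^q"
    by (simp add: algebra_simps)
  also have "\<dots> = w * ((1 + w^q) * Gx^q)" by (simp only: p5) simp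
  also have "\<dots> = w * (x * u * (u^q * w^q + 1))" by (simp only: e1 p1)
  also have "\<dots> = x * (u^q * u) * (w^q * w) + x * u * w" by (simp add: algebra_simps)
  also have "\<dots> = (1 + w) * Gx" by (simp only: p2 p5 gc) (simp add: algebra_simps)
  finally have "Gx^q = Gx" using w1' by simp
  thus ?thesis unfolding Gx_def by simp
qed

end



context FF begin

lemma frobj: "((x::'a) + y)^(2^j) = x^(2^j) + y^(2^j)" by (rule frob[OF c2])

lemma gamK: "\<gamma> \<notin> K" using gam by simp

definition C0 :: "'a \<Rightarrow> 'a \<Rightarrow> 'a" where
  "C0 l a = l*(\<gamma>^m)^q*\<gamma>^q + l*\<gamma>*\<gamma>^m + a*\<gamma>*\<gamma>^m + a^q*\<gamma>^q*\<gamma>^m + a*\<gamma>*(\<gamma>^m)^q + a^q*(\<gamma>^m)^q*\<gamma>^q"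

lemma C0_K: assumes l: "l \<in> K" shows "C0 l a \<in> K"
proof -
  define X0 where "X0 = (l + a)*\<gamma>*\<gamma>^m + a*\<gamma>*(\<gamma>^m)^q"
  have lq: "l^q = l" using l by simp
  have "X0^q = (l + a^q)*\<gamma>^q*(\<gamma>^m)^q + a^q*\<gamma>^q*\<gamma>^m"
    unfolding X0_def by (simp only: frobq power_mult_distrib qq lq)
  hence "C0 l a = X0 + X0^q" unfolding C0_def X0_def by (simp add: algebra_simps)
  thus ?thesis using T_K by simp
qed

lemma core:
  assumes l: "l \<in> K" and z: "z \<in> K"
  shows "(l * Gf (z + \<gamma>) + a * (z + \<gamma>) + a^q * (z + \<gamma>)^q = 0) \<longleftrightarrow>
         ((l + a + a^q) * (\<gamma>^m + (\<gamma>^m)^q) * z + l * (\<gamma> + \<gamma>^q) * z^m + C0 l a = 0)"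
proof -
  define v where "v = z + \<gamma>"
  have zq: "z^q = z" using z by simp
  have vq: "v^q = z + \<gamma>^q" unfolding v_def by (simp only: frobq zq)
  have v0: "v \<noteq> 0"
  proof
    assume "v = 0"
    hence "\<gamma> = z" unfolding v_def using c2_eq[OF c2, of z \<gamma>] by simp
    thus False using z gamK by simp
  qed
  have vK: "v^q \<noteq> v" using vq gam unfolding v_def by simp
  define u where "u = v^(q-1)"
  define w where "w = u^m"
  have p2: "u^q * u = 1" using P2[OF v0] u_def by simp
  have p5: "w^q * w = 1" unfolding w_def by (rule P5[OF p2])
  have p1: "v^q = v * u" unfolding u_def by (rule P1)
  have p4: "u * w^s = 1" using p2 unfolding w_def by (simp add: P3 mult.commute)
  have u0: "u \<noteq> 0" using p2 by auto
  have w0: "w \<noteq> 0" unfolding w_def using u0 by simp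
  have w1: "w \<noteq> 1"
  proof
    assume "w = 1"
    hence "u = 1" using p4 by simp
    hence "v^q = v" using p1 by simp
    thus False using vK by simp
  qed
  hence w1': "1 + w \<noteq> 0" using c2_eq[OF c2, of 1 w] by auto
  define A where "A = v^m"
  define A' where "A' = v^(q*m)"
  define y where "y = z^m"
  define \<delta> where "\<delta> = \<gamma>^m"
  have hA: "A = y + \<delta>" unfolding A_def v_def y_def \<delta>_def by (rule frobj)
  have hA': "A' = y + \<delta>^q" unfolding A'_def y_def \<delta>_def
    by (simp only: power_mult vq frobj) (simp only: power_mult[symmetric] mult.commute)
  have hwA: "w * A = A'" unfolding w_def u_def A_def A'_def
  proof -
    have ex: "(q-1)*m + m = q*m" using q_pos by (simp add: algebra_simps)
    show "(v^(q-1))^m * v^m = v^(q*m)" by (simp only: power_mult[symmetric] power_add[symmetric] ex)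
  qed
  have hAs: "A^s = z + \<gamma>^q" unfolding A_def by (simp only: power_mult[symmetric] ms vq)
  have hA's: "A'^s = z + \<gamma>" unfolding A'_def by (simp only: power_mult[symmetric] mult.assoc ms ferm v_def)
  have hwAs: "w^s * A^s = A'^s" using hwA by (simp only: power_mult_distrib[symmetric])
  define cv where "cv = l * Gf v + a * v + a^q * v^q"
  have gc: "(1 + w) * Gf v = v * (u * w + 1)" unfolding w_def by (rule GC[OF u_def v0])
  have step1: "(1 + w) * w^s * cv = v * (l * (w + w^s) + (1 + w) * (a * w^s + a^q))"
  proof -
    have "(1 + w) * w^s * cv = l * w^s * ((1 + w) * Gf v) + (1 + w) * (a * v * w^s + a^q * v * (u * w^s))"
      unfolding cv_def p1 by (simp add: algebra_simps)
    also have "\<dots> = l * v * (w * (u * w^s) + w^s) + (1 + w) * (a * v * w^s + a^q * v * (u * w^s))"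
      unfolding gc by (simp add: algebra_simps)
    also have "\<dots> = v * (l * (w + w^s) + (1 + w) * (a * w^s + a^q))"
      unfolding p4 by (simp add: algebra_simps)
    finally show ?thesis .
  qed
  define R where "R = l*A'*A^s + l*A'^s*A + a*A'^s*A + a^q*A^s*A + a*A'^s*A' + a^q*A'*A^s"
  have step2: "A^(s+1) * (l * (w + w^s) + (1 + w) * (a * w^s + a^q)) = R"
  proof -
    have "A^(s+1) * (l * (w + w^s) + (1 + w) * (a * w^s + a^q)) =
      l*(w*A)*A^s + l*(w^s*A^s)*A + a*(w^s*A^s)*A + a^q*A^s*A + a*(w^s*A^s)*(w*A) + a^q*(w*A)*A^s"
      by (simp add: algebra_simps)
    also have "\<dots> = R" unfolding R_def hwA hwAs ..
    finally show ?thesis .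
  qed
  define e where "e = l + a + a^q"
  have step3: "R = e * (\<delta> + \<delta>^q) * z + l * (\<gamma> + \<gamma>^q) * y + C0 l a
      + 2 * (y*z*(l + a + a^q) + y*(a*\<gamma> + a^q*\<gamma>^q))"
    unfolding R_def hAs hA's unfolding hA hA' e_def C0_def \<delta>_def[symmetric] by (simp add: algebra_simps)
  hence step3': "R = e * (\<delta> + \<delta>^q) * z + l * (\<gamma> + \<gamma>^q) * y + C0 l a"
    by (simp only: c2 mult_zero_left add_0_right)
  have "(1 + w) * w^s * A^(s+1) * cv = v * R"
  proof -
    have "(1 + w) * w^s * A^(s+1) * cv = A^(s+1) * ((1 + w) * w^s * cv)" by (simp only: mult_ac)
    also have "\<dots> = v * R" unfolding step1 step2[symmetric] by (simp only: mult_ac)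
    finally show ?thesis .
  qed
  note H = this
  have "A \<noteq> 0" unfolding A_def using v0 by simp
  hence X0: "(1 + w) * w^s * A^(s+1) \<noteq> 0" using w1' w0 by simp
  have "cv = 0 \<longleftrightarrow> (1 + w) * w^s * A^(s+1) * cv = 0" using X0 by simp
  also have "\<dots> \<longleftrightarrow> v * R = 0" by (simp only: H)
  also have "\<dots> \<longleftrightarrow> R = 0" using v0 by simp
  finally have "cv = 0 \<longleftrightarrow> R = 0" .
  thus ?thesis unfolding cv_def v_def[symmetric] step3' e_def \<delta>_def y_def by simp
qed

end



lemma iter_pow2:
  assumes "(t::'a::field)^(2^j) = t" shows "t^(2^(j*x)) = t"
proof (induction x)
  case 0 then show ?case by simp
next
  case (Suc x)
  have ex: "(2::nat)^(j*Suc x) = 2^(j*x) * 2^j" by (simp add: power_add)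
  have "t^(2^(j*Suc x)) = (t^(2^(j*x)))^(2^j)" by (subst ex) (rule power_mult)
  also have "\<dots> = t" using Suc assms by simp
  finally show ?case .
qed

context FF begin

lemma cop2: "coprime (k - r) k"
proof (rule coprimeI)
  fix d assume d1: "d dvd (k - r)" and d2: "d dvd k"
  have "r = k - (k - r)" using rk by simp
  moreover have "d dvd k - (k - r)" by (rule dvd_diff_nat[OF d2 d1])
  ultimately have "d dvd r" by simp
  thus "is_unit d" by (rule coprime_common_divisor[OF cop _ d2])
qed

lemma pow_one:
  assumes t: "t \<in> K" "t \<noteq> 0" and h: "t^(m-1) = 1"
  shows "t = 1"
proof -
  have "t^m = t^(m-1+1)" by simp
  also have "\<dots> = t" using h by (simp only: power_add) simp
  finally have tm: "t^(2^(k-r)) = t" .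
  have "k - r \<noteq> 0" using rk by simp
  from bezout_nat[OF this, of k] obtain x y where xy: "(k-r)*x = k*y + gcd (k-r) k" by blast
  hence xy': "(k-r)*x = k*y + 1" using cop2 by simp
  have "t^(2^((k-r)*x)) = t" by (rule iter_pow2[OF tm])
  hence "t^(2^(k*y+1)) = t" by (simp only: xy')
  moreover have "t^(2^(k*y)) = t" by (rule iter_pow2) (use t in simp)
  moreover have "t^(2^(k*y+1)) = (t^(2^(k*y)))^2" by (simp only: power_add power_mult power_one_right)
  ultimately have "t^2 = t" by simp
  hence "t * (t - 1) = 0" by (simp add: power2_eq_square algebra_simps)
  thus ?thesis using t by simp
qed

lemma pow_inj: "inj_on (\<lambda>z. z^(m-1)) (K - {0})"
proof (rule inj_onI)
  fix x y assume x: "x \<in> K - {0}" and y: "y \<in> K - {0}" and e: "x^(m-1) = y^(m-1)"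
  have "(x/y)^(m-1) = 1" using e y by (simp add: power_divide)
  moreover have "x/y \<in> K" "x/y \<noteq> 0" using x y by (auto simp: power_divide)
  ultimately have "x/y = 1" using pow_one by blast
  thus "x = y" using y by simp
qed

lemma pow_swap: "((z::'b::monoid_mult)^a)^b = (z^b)^a"
  by (simp only: power_mult[symmetric] mult.commute)

lemma pow_surj: "(\<lambda>z. z^(m-1)) ` (K - {0}) = K - {0}"
proof (rule endo_inj_surj[OF _ _ pow_inj])
  show "(\<lambda>z. z^(m-1)) ` (K - {0}) \<subseteq> K - {0}"
  proof
    fix y assume "y \<in> (\<lambda>z. z^(m-1)) ` (K - {0})"
    then obtain z where z: "z \<in> K" "z \<noteq> 0" "y = z^(m-1)" by auto
    have "y^q = (z^q)^(m-1)" using z by (simp only: pow_swap)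
    thus "y \<in> K - {0}" using z by simp
  qed
qed simp

lemma frobm_inj: "inj_on (\<lambda>z::'a. z^m) K"
  by (rule inj_onI) (rule frob_inj[OF c2])

lemma frobm_surj: "(\<lambda>z::'a. z^m) ` K = K"
proof (rule endo_inj_surj[OF _ _ frobm_inj])
  show "(\<lambda>z::'a. z^m) ` K \<subseteq> K"
  proof
    fix y assume "y \<in> (\<lambda>z::'a. z^m) ` K"
    then obtain z where z: "z \<in> K" "y = z^m" by auto
    have "y^q = (z^q)^m" using z by (simp only: pow_swap)
    thus "y \<in> K" using z by simp
  qed
qed simp

lemma phi_add: "C1 * ((x::'a) + y) + D * (x + y)^m = (C1 * x + D * x^m) + (C1 * y + D * y^m)"
  by (simp only: frobj) (simp add: algebra_simps)

lemma count:
  assumes C1: "C1 \<in> K" and D: "D \<in> K" "D \<noteq> 0" and Cc: "Cc \<in> K"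
  shows "(if C1 = 0 then 1 else 0) + card {z \<in> K. C1*z + D*z^m + Cc = 0} \<in> {0, 2::nat}"
proof (cases "C1 = 0")
  case True
  have "Cc / D \<in> K" using Cc D by (simp add: power_divide)
  hence "Cc / D \<in> (\<lambda>z. z^m) ` K" by (simp only: frobm_surj)
  then obtain z0 where z0': "Cc / D = z0^m" "z0 \<in> K" by (rule imageE)
  hence z0: "z0 \<in> K" "z0^m = Cc / D" by simp_all
  have "{z \<in> K. C1*z + D*z^m + Cc = 0} = {z0}"
  proof (intro set_eqI iffI)
    fix z assume "z \<in> {z \<in> K. C1*z + D*z^m + Cc = 0}"
    hence z: "z \<in> K" "D*z^m + Cc = 0" using True by auto
    hence "D*z^m = Cc" using c2_eq[OF c2] by blast
    moreover have "D*z0^m = Cc" using z0 D by simp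
    ultimately have "D * z^m = D * z0^m" by simp
    hence "z^m = z0^m" using D by simp
    hence "z = z0" using inj_onD[OF frobm_inj] z(1) z0(1) by blast
    thus "z \<in> {z0}" by simp
  next
    fix z assume "z \<in> {z0}"
    hence "D*z^m = Cc" using z0 D by simp
    hence "D*z^m + Cc = 0" by (simp only: add_self)
    thus "z \<in> {z \<in> K. C1*z + D*z^m + Cc = 0}" using True \<open>z \<in> {z0}\<close> z0 by simp
  qed
  thus ?thesis using True by simp
next
  case False
  have "C1 / D \<in> K - {0}" using C1 D False by (simp add: power_divide)
  hence "C1 / D \<in> (\<lambda>z. z^(m-1)) ` (K - {0})" by (simp only: pow_surj)
  then obtain z0 where z0': "C1 / D = z0^(m-1)" "z0 \<in> K - {0}" by (rule imageE)
  hence z0: "z0 \<in> K - {0}" "z0^(m-1) = C1 / D" by simp_all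
  have m1: "m = m - 1 + 1" by simp
  have phi0: "C1 * z0 + D * z0^m = 0"
  proof -
    have "D * z0^m = D * z0^(m-1) * z0" by (subst m1) (simp only: power_add power_one_right mult.assoc)
    also have "\<dots> = C1 * z0" using z0 D by simp
    finally show ?thesis by (simp add: add_self)
  qed
  show ?thesis
  proof (cases "{z \<in> K. C1*z + D*z^m + Cc = 0} = {}")
    case True then show ?thesis using False by simp
  next
    case ne: False
    then obtain z1 where z1: "z1 \<in> K" "C1*z1 + D*z1^m + Cc = 0" by blast
    have "{z \<in> K. C1*z + D*z^m + Cc = 0} = {z1, z1 + z0}"
    proof (intro set_eqI iffI)
      fix z assume "z \<in> {z \<in> K. C1*z + D*z^m + Cc = 0}"
      hence z: "z \<in> K" "C1*z + D*z^m + Cc = 0" by auto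
      define t where "t = z + z1"
      have tK: "t \<in> K" unfolding t_def using z z1 by (simp add: frobq)
      have "(C1*z + D*z^m + Cc) + (C1*z1 + D*z1^m + Cc) = (C1*z + D*z^m) + (C1*z1 + D*z1^m) + (Cc + Cc)"
        by (simp only: add_ac)
      hence "C1*t + D*t^m = (C1*z + D*z^m + Cc) + (C1*z1 + D*z1^m + Cc)" unfolding t_def phi_add
        by (simp only: add_self add_0_right)
      hence pt: "C1*t + D*t^m = 0" using z z1 by simp
      show "z \<in> {z1, z1 + z0}"
      proof (cases "t = 0")
        case True
        hence "z = z1" unfolding t_def using c2_eq[OF c2] by blast
        thus ?thesis by simp
      next
        case tn: False
        have "C1 * t = D * t^m" using pt c2_eq[OF c2] by blast
        hence "D * t^m = C1 * t" by (rule sym)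
        moreover have "D * t^m = D * t^(m-1) * t" by (subst m1) (simp only: power_add power_one_right mult.assoc)
        ultimately have "t^(m-1) = C1 / D" using tn D by (simp add: field_simps)
        hence "t^(m-1) = z0^(m-1)" using z0 by simp
        moreover have "t \<in> K - {0}" using tK tn by simp
        ultimately have "t = z0" using inj_onD[OF pow_inj] z0(1) by blast
        have "z = (z + z1) + z1" by (simp only: add.assoc add_self add_0_right)
        hence "z = z1 + z0" using \<open>t = z0\<close> unfolding t_def by (simp only: add.commute)
        thus ?thesis by simp
      qed
    next
      fix z assume "z \<in> {z1, z1 + z0}"
      moreover have "C1*(z1 + z0) + D*(z1+z0)^m + Cc = 0"
        unfolding phi_add using z1 phi0 by (simp add: algebra_simps)
      moreover have "z1 + z0 \<in> K" using z1 z0 by (simp add: frobq)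
      ultimately show "z \<in> {z \<in> K. C1*z + D*z^m + Cc = 0}" using z1 by auto
    qed
    moreover have "z1 \<noteq> z1 + z0" using z0 by simp
    ultimately show ?thesis using False by simp
  qed
qed

end



context FF begin

definition cf :: "'a \<Rightarrow> 'a \<Rightarrow> 'a \<Rightarrow> 'a" where
  "cf l a v = l * Gf v + (a * v + (a * v)^q)"

lemma cf_K: "l \<in> K \<Longrightarrow> cf l a v \<in> K"
  unfolding cf_def using Gf_K T_K by (simp add: frobq power_mult_distrib)

lemma h_line:
  assumes l: "l \<in> K" and t: "t \<in> K"
  shows "sgn2 (tr k (l * Gf (t * v)) + tr (2*k) (a * (t * v))) = sgn2 (tr k (t * cf l a v))"
proof -
  have tq: "t^q = t" using t by simp
  have "tr k (l * Gf (t * v)) + tr (2*k) (a * (t * v)) = tr k (l * Gf (t * v) + (a * (t * v) + (a * (t * v))^q))"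
    by (simp only: tr_n[OF c2] tr_add[OF c2])
  also have "l * Gf (t * v) + (a * (t * v) + (a * (t * v))^q) = t * cf l a v"
    unfolding cf_def Gf_hom[OF t] by (simp add: power_mult_distrib tq algebra_simps)
  finally show ?thesis by simp
qed

lemma tr0: "tr k (0::'a) = 0" by (simp add: tr_def power_0_left)

lemma decomp:
  shows "inj_on (\<lambda>(t, z). t * (z + \<gamma>)) ((K - {0}) \<times> K)" and "K \<inter> (\<lambda>(t, z). t * (z + \<gamma>)) ` ((K - {0}) \<times> K) = {}"
    and "K \<union> (\<lambda>(t, z). t * (z + \<gamma>)) ` ((K - {0}) \<times> K) = UNIV"
proof -
  define P where "P = (\<lambda>(t, z). t * (z + \<gamma>))"
  have "inj_on P ((K - {0}) \<times> K) \<and> K \<inter> P ` ((K - {0}) \<times> K) = {} \<and> K \<union> P ` ((K - {0}) \<times> K) = UNIV"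
  proof (intro conjI)
  show inj: "inj_on P ((K - {0}) \<times> K)"
  proof (rule inj_onI)
    fix p p' assume hp: "p \<in> (K-{0})\<times>K" "p' \<in> (K-{0})\<times>K" and e0: "P p = P p'"
    obtain t z where p: "p = (t, z)" by (cases p)
    obtain t' z' where p': "p' = (t', z')" by (cases p')
    have t: "t \<in> K" "t \<noteq> 0" and z: "z \<in> K" using hp(1) p by auto
    have t': "t' \<in> K" "t' \<noteq> 0" and z': "z' \<in> K" using hp(2) p' by auto
    have e: "P (t, z) = P (t', z')" using e0 p p' by simp
    have e': "(t - t') * \<gamma> = t' * z' - t * z" using e unfolding P_def by (simp add: algebra_simps)
    have tt: "t = t'"
    proof (rule ccontr)
      assume "t \<noteq> t'"
      hence "\<gamma> = (t' * z' - t * z) / (t - t')" using e' by (simp add: field_simps)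
      moreover have "(t' * z' - t * z) / (t - t') \<in> K" using t z t' z'
        by (simp add: minus frobq power_divide power_mult_distrib)
      ultimately show False using gamK by simp
    qed
    moreover have "z = z'" using e' tt t by simp
    ultimately show "p = p'" using p p' by simp
  qed
  show disj: "K \<inter> P ` ((K - {0}) \<times> K) = {}"
  proof (rule ccontr)
    assume "K \<inter> P ` ((K - {0}) \<times> K) \<noteq> {}"
    then obtain t z where t: "t \<in> K" "t \<noteq> 0" and z: "z \<in> K" and inK: "t * (z + \<gamma>) \<in> K"
      unfolding P_def by auto
    have "z + \<gamma> = t * (z + \<gamma>) / t" using t by simp
    moreover have "t * (z + \<gamma>) / t \<in> K" by (rule K_div[OF inK t(1)])
    ultimately have "z + \<gamma> \<in> K" by simp
    hence "(z + \<gamma>) + z \<in> K" using z by (simp only: K_add)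
    hence "\<gamma> \<in> K" by (simp add: add_ac add_self)
    thus False using gamK by simp
  qed
  have "card (K \<union> P ` ((K - {0}) \<times> K)) = card K + card (P ` ((K - {0}) \<times> K))"
    by (rule card_Un_disjoint) (use disj in auto)
  also have "card (P ` ((K - {0}) \<times> K)) = card ((K - {0}) \<times> K)" by (rule card_image[OF inj])
  also have "\<dots> = (q - 1) * q" using cK by (simp add: card_cartesian_product card_Diff_singleton)
  also have "card K + (q - 1) * q = q * q" using cK q_pos by (simp add: algebra_simps)
  finally show "K \<union> P ` ((K - {0}) \<times> K) = UNIV"
    using cardU by (intro card_eq_UNIV_imp_eq_UNIV) simp_all
  qed
  thus "inj_on (\<lambda>(t, z). t * (z + \<gamma>)) ((K - {0}) \<times> K)" and "K \<inter> (\<lambda>(t, z). t * (z + \<gamma>)) ` ((K - {0}) \<times> K) = {}"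
    and "K \<union> (\<lambda>(t, z). t * (z + \<gamma>)) ` ((K - {0}) \<times> K) = UNIV" unfolding P_def by blast+
qed

lemma sum_if_card: "(\<Sum>z\<in>K. (if Q z then int q else 0)) = int q * int (card {z\<in>K. Q z})"
proof -
  have "(\<Sum>z\<in>K. (if Q z then int q else 0)) = (\<Sum>z\<in>{z\<in>K. Q z}. int q)"
    by (rule sum.inter_filter[symmetric]) simp
  thus ?thesis by simp
qed

lemma walsh:
  assumes l: "l \<in> K" "l \<noteq> 0"
  shows "\<bar>\<Sum>x\<in>UNIV. sgn2 (tr k (l * Gf x) + tr (2*k) (a * x))\<bar> = int q"
proof -
  define h where "h x = sgn2 (tr k (l * Gf x) + tr (2*k) (a * x))" for x
  define P where "P = (\<lambda>(t, z). t * (z + \<gamma>))"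
  define B where "B = (K - {0}) \<times> K"
  define c where "c v = cf l a v" for v
  have cK': "c v \<in> K" for v unfolding c_def using cf_K[OF l(1)] .
  have U: "UNIV = K \<union> P ` B" using decomp(3) unfolding P_def B_def by simp
  have "(\<Sum>x\<in>UNIV. h x) = (\<Sum>x\<in>K. h x) + (\<Sum>x\<in>P ` B. h x)"
    unfolding U by (rule sum.union_disjoint) (use decomp(2) in \<open>auto simp: P_def B_def\<close>)
  also have "(\<Sum>x\<in>K. h x) = (\<Sum>t\<in>K. sgn2 (tr k (t * c 1)))"
    by (intro sum.cong refl) (use h_line[OF l(1), of _ 1 a] in \<open>simp add: h_def c_def\<close>)
  also have "\<dots> = (if c 1 = 0 then int q else 0)" by (rule charsum[OF cK'])
  also have "(\<Sum>x\<in>P ` B. h x) = (\<Sum>p\<in>B. h (P p))"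
    by (rule sum.reindex[unfolded comp_def]) (use decomp(1) in \<open>simp add: P_def B_def\<close>)
  also have "\<dots> = (\<Sum>p\<in>B. case p of (t, z) \<Rightarrow> sgn2 (tr k (t * c (z + \<gamma>))))"
  proof (intro sum.cong refl)
    fix p assume "p \<in> B"
    then obtain t z where p: "p = (t, z)" "t \<in> K" unfolding B_def by auto
    show "h (P p) = (case p of (t, z) \<Rightarrow> sgn2 (tr k (t * c (z + \<gamma>))))"
      unfolding p P_def h_def c_def using h_line[OF l(1) p(2)] by simp
  qed
  also have "\<dots> = (\<Sum>t\<in>K - {0}. \<Sum>z\<in>K. sgn2 (tr k (t * c (z + \<gamma>))))"
    unfolding B_def by (rule sum.cartesian_product[symmetric])
  also have "\<dots> = (\<Sum>z\<in>K. \<Sum>t\<in>K - {0}. sgn2 (tr k (t * c (z + \<gamma>))))" by (rule sum.swap)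
  also have "\<dots> = (\<Sum>z\<in>K. (if c (z + \<gamma>) = 0 then int q else 0) - 1)"
  proof (intro sum.cong refl)
    fix z
    have "(\<Sum>t\<in>K. sgn2 (tr k (t * c (z + \<gamma>)))) = sgn2 (tr k (0 * c (z + \<gamma>))) + (\<Sum>t\<in>K - {0}. sgn2 (tr k (t * c (z + \<gamma>))))"
      by (rule sum.remove) simp_all
    moreover have "sgn2 (tr k (0 * c (z + \<gamma>))) = 1" by (simp add: tr0 sgn2_def)
    ultimately show "(\<Sum>t\<in>K - {0}. sgn2 (tr k (t * c (z + \<gamma>)))) = (if c (z + \<gamma>) = 0 then int q else 0) - 1"
      using charsum[OF cK'] by simp
  qed
  also have "\<dots> = int q * int (card {z\<in>K. c (z + \<gamma>) = 0}) - int q"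
    by (simp add: sum_subtractf sum_if_card cK)
  finally have W: "(\<Sum>x\<in>UNIV. h x) = int q * (int (if c 1 = 0 then 1 else 0) + int (card {z\<in>K. c (z + \<gamma>) = 0})) - int q"
    by (simp add: algebra_simps)
  define e where "e = l + a + a^q"
  define C1 where "C1 = e * (\<gamma>^m + (\<gamma>^m)^q)"
  define D where "D = l * (\<gamma> + \<gamma>^q)"
  have lq: "l^q = l" using l by simp
  have eK: "e \<in> K" unfolding e_def by (simp add: frobq lq qq add_ac)
  have C1K: "C1 \<in> K" unfolding C1_def using eK T_K by (simp add: power_mult_distrib)
  have DK: "D \<in> K" unfolding D_def using l T_K by (simp add: power_mult_distrib)
  have g1: "\<gamma> + \<gamma>^q \<noteq> 0"
  proof
    assume "\<gamma> + \<gamma>^q = 0"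
    hence "\<gamma> = \<gamma>^q" using c2_eq[OF c2] by blast
    thus False using gam by simp
  qed
  have g2: "\<gamma>^m + (\<gamma>^m)^q \<noteq> 0"
  proof
    assume "\<gamma>^m + (\<gamma>^m)^q = 0"
    hence "\<gamma>^m = (\<gamma>^q)^m" using c2_eq[OF c2] pow_swap by metis
    hence "\<gamma> = \<gamma>^q" by (rule frob_inj[OF c2])
    thus False using gam by simp
  qed
  have D0: "D \<noteq> 0" unfolding D_def using l g1 by simp
  have C1e: "(C1 = 0) = (e = 0)" unfolding C1_def using g2 by simp
  have c1: "c 1 = e" unfolding c_def cf_def e_def using Gf_one by (simp add: add_ac)
  have S: "{z\<in>K. c (z + \<gamma>) = 0} = {z\<in>K. C1*z + D*z^m + C0 l a = 0}"
  proof (intro Collect_cong conj_cong refl)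
    fix z assume z: "z \<in> K"
    have "c (z + \<gamma>) = l * Gf (z + \<gamma>) + a * (z + \<gamma>) + a^q * (z + \<gamma>)^q"
      unfolding c_def cf_def by (simp add: power_mult_distrib add_ac)
    thus "(c (z + \<gamma>) = 0) = (C1*z + D*z^m + C0 l a = 0)"
      using core[OF l(1) z, of a] unfolding C1_def D_def e_def by (simp add: mult.assoc)
  qed
  have N: "(if C1 = 0 then 1 else 0) + card {z\<in>K. C1*z + D*z^m + C0 l a = 0} \<in> {0, 2::nat}"
    by (rule count[OF C1K DK D0 C0_K[OF l(1)]])
  hence N': "int (if c 1 = 0 then 1 else 0) + int (card {z\<in>K. c (z + \<gamma>) = 0}) \<in> {0, 2}"
    unfolding S c1 C1e[symmetric] by (auto split: if_splits)
  define Nn where "Nn = int (if c 1 = 0 then 1 else 0) + int (card {z\<in>K. c (z + \<gamma>) = 0})"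
  have "Nn = 0 \<or> Nn = 2" using N' unfolding Nn_def by simp
  moreover have "(\<Sum>x\<in>UNIV. h x) = int q * Nn - int q" using W unfolding Nn_def .
  ultimately show ?thesis unfolding h_def by auto
qed

end



theorem proposition2:
  fixes n k r :: nat
    and G :: "'a::{field,finite} \<Rightarrow> 'a"
  assumes card: "card (UNIV :: 'a set) = 2 ^ n"
    and nk: "n = 2 * k"
    and r1: "1 < r" and rk: "r < k"
    and cop: "coprime r k"
    and G_def: "\<And>x. G x = (\<Sum>i=1..2^r - 1. x ^ ((i * 2 ^ (k - r) + 1) * (2 ^ k - 1) + 1))"
  shows "(\<forall>x. in_subfield k (G x)) \<and> vectorial_bent n k G"
proof -
  have k0: "k > 0" using r1 rk by simp
  have n0: "n > 0" using nk k0 by simp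
  have c2: "(2::'a) = 0" by (rule char2[OF card n0])
  have cardU: "card (UNIV::'a set) = 2^k * 2^k" using card nk by (simp add: mult_2 power_add)
  have ferm: "\<And>x::'a. x^(2^k*2^k) = x" using fermat[where 'a='a] cardU by metis
  have cK: "card {y::'a. y^(2^k) = y} = 2^k" by (rule card_K[OF c2 cardU k0])
  obtain \<gamma> :: 'a where gam: "\<gamma>^(2^k) \<noteq> \<gamma>"
  proof (rule ccontr)
    assume "\<not> thesis"
    hence all: "\<forall>y::'a. y^(2^k) = y" using that by blast
    hence "{y::'a. y^(2^k) = y} = UNIV" by auto
    hence "(2::nat)^k = 2^k * 2^k" using cK cardU by simp
    moreover have "(2::nat)^k \<ge> 2" using k0 by (metis One_nat_def Suc_leI power_increasing power_one_right zero_less_numeral one_le_numeral)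
    ultimately show False by simp
  qed
  interpret FF k r \<gamma>
    by unfold_locales (use c2 ferm cardU cK r1 rk cop gam in auto)
  have GG: "G = Gf" by (rule ext) (simp add: G_def Gf_def)
  show ?thesis
  proof
    show "\<forall>x. in_subfield k (G x)" unfolding GG in_subfield_def using Gf_K by simp
    show "vectorial_bent n k G" unfolding vectorial_bent_def GG in_subfield_def nk
      using walsh by simp
  qed
qed


end
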